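(* Let $\nu$ be a Borel probability measure on $\operatorname{Hom}(\mathbb{S}^1)$ such that $\Gamma_\nu$ is proximal and does not fix any point in $\mathbb{S}^1$. Let $\pi,\theta\colon X_\nu^{\mathbb{N}}\to\mathbb{S}^1$ be measurable maps such that for all $x\in\mathbb{S}^1$ and $\nu^{\mathbb{N}}$-almost every $\omega=(f_n)_{n\in\mathbb{N}}$, $\lim_{n\to\infty}f_1\circ\cdots\circ f_n(x)=\pi(\omega)$ and $\lim_{n\to\infty}f_1^{-1}\circ\cdots\circ f_n^{-1}(x)=\theta(\omega)$. Then the probability measures $$\eta=\int_{X_\nu^{\mathbb{N}}}\delta_{\pi(\omega)}\,d\nu^{\mathbb{N}}(\omega)\quad\text{and}\quad \eta^-=\int_{X_\nu^{\mathbb{N}}}\delta_{\theta(\omega)}\,d\nu^{\mathbb{N}}(\omega)$$ are the unique probability measures on $\mathbb{S}^1$ satisfying, respectively, $$\eta=\int_{X_\nu}f_*\eta\,d\nu(f)\quad\text{and}\quad \eta^-=\int_{X_\nu}(f^{-1})_*\eta^-\,d\nu(f).$$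
   Context: $\mathbb{S}^1=\mathbb{R}/\mathbb{Z}$ with its usual metric $d$; $\operatorname{Hom}(\mathbb{S}^1)$ is the group of all homeomorphisms of $\mathbb{S}^1$ (orientation preserving or reversing). $X_\nu$ is the topological support of $\nu$, $\Gamma_\nu$ the semigroup generated by $X_\nu$. $\Gamma_\nu$ is proximal if for all $x,y\in\mathbb{S}^1$ there is a sequence $(g_n)$ in $\Gamma_\nu$ with $d(g_n(x),g_n(y))\to0$; it does not fix any point if no $x$ satisfies $f(x)=x$ for all $f\in\Gamma_\nu$. $\nu^{\mathbb{N}}$ is the product measure on $X_\nu^{\mathbb{N}}$, with elements written $\omega=(f_n)_{n\in\mathbb{N}}$. *)

theory Defs
  imports "HOL-Probability.Probability"
begin

text \<open>The circle S^1 = R/Z, realised as the unit circle in the complex plane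
  (z = exp(2 pi i t)).  Its R/Z metric is |Arg(z/w)|/(2 pi).\<close>

definition S1 :: "complex set" where
  "S1 = sphere 0 1"

definition s1dist :: "complex \<Rightarrow> complex \<Rightarrow> real" where
  "s1dist z w = \<bar>Arg (z / w)\<bar> / (2 * pi)"

definition S1M :: "complex measure" where
  "S1M = restrict_space borel S1"

text \<open>Hom(S^1): homeomorphisms of S^1 (either orientation), as functions that are
  extensional (undefined) outside S1.\<close>
definition Hom :: "(complex \<Rightarrow> complex) set" where
  "Hom = {f. f \<in> extensional S1 \<and> (\<exists>g. homeomorphism S1 S1 f g)}"

text \<open>Measurable structure on Hom(S^1): the sigma-algebra generated by the evaluation
  maps, which coincides with the Borel sigma-algebra of the (Polish) compact-open topology.\<close>
definition HomM :: "(complex \<Rightarrow> complex) measure" where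
  "HomM = restrict_space (Pi\<^sub>M S1 (\<lambda>_. borel)) Hom"

definition hinv :: "(complex \<Rightarrow> complex) \<Rightarrow> complex \<Rightarrow> complex" where
  "hinv f = restrict (inv_into S1 f) S1"

definition udist :: "(complex \<Rightarrow> complex) \<Rightarrow> (complex \<Rightarrow> complex) \<Rightarrow> real" where
  "udist f g = (SUP x\<in>S1. cmod (f x - g x))"

definition supp :: "(complex \<Rightarrow> complex) measure \<Rightarrow> (complex \<Rightarrow> complex) set" where
  "supp nu = {f \<in> Hom. \<forall>e>0. emeasure nu {g \<in> space nu. udist f g < e} > 0}"

inductive_set Gamma :: "(complex \<Rightarrow> complex) measure \<Rightarrow> (complex \<Rightarrow> complex) set"
  for nu where
  gen: "f \<in> supp nu \<Longrightarrow> f \<in> Gamma nu"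
| comp: "f \<in> Gamma nu \<Longrightarrow> g \<in> Gamma nu \<Longrightarrow> compose S1 f g \<in> Gamma nu"

definition proximal :: "(complex \<Rightarrow> complex) measure \<Rightarrow> bool" where
  "proximal nu \<longleftrightarrow> (\<forall>x\<in>S1. \<forall>y\<in>S1. \<exists>g :: nat \<Rightarrow> complex \<Rightarrow> complex.
      (\<forall>n. g n \<in> Gamma nu) \<and> (\<lambda>n. s1dist (g n x) (g n y)) \<longlonglongrightarrow> 0)"

definition fixes_point :: "(complex \<Rightarrow> complex) measure \<Rightarrow> bool" where
  "fixes_point nu \<longleftrightarrow> (\<exists>x\<in>S1. \<forall>f\<in>Gamma nu. f x = x)"

text \<open>Left compositions f_1 o ... o f_n and f_1^{-1} o ... o f_n^{-1}
  (omega 0 plays the role of f_1).\<close>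
primrec fwd_comp :: "(nat \<Rightarrow> complex \<Rightarrow> complex) \<Rightarrow> nat \<Rightarrow> complex \<Rightarrow> complex" where
  "fwd_comp \<omega> 0 = id"
| "fwd_comp \<omega> (Suc n) = fwd_comp \<omega> n \<circ> \<omega> n"

primrec bwd_comp :: "(nat \<Rightarrow> complex \<Rightarrow> complex) \<Rightarrow> nat \<Rightarrow> complex \<Rightarrow> complex" where
  "bwd_comp \<omega> 0 = id"
| "bwd_comp \<omega> (Suc n) = bwd_comp \<omega> n \<circ> hinv (\<omega> n)"

definition stationary :: "(complex \<Rightarrow> complex) measure \<Rightarrow> complex measure \<Rightarrow> bool" where
  "stationary nu \<mu> \<longleftrightarrow>
     (\<forall>A\<in>sets S1M. emeasure \<mu> A = (\<integral>\<^sup>+ f. emeasure (distr \<mu> S1M f) A \<partial>nu))"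

definition inv_stationary :: "(complex \<Rightarrow> complex) measure \<Rightarrow> complex measure \<Rightarrow> bool" where
  "inv_stationary nu \<mu> \<longleftrightarrow>
     (\<forall>A\<in>sets S1M. emeasure \<mu> A = (\<integral>\<^sup>+ f. emeasure (distr \<mu> S1M (hinv f)) A \<partial>nu))"

end

theory Submission
  imports Defs
begin


primrec gcomp :: "('h \<Rightarrow> complex \<Rightarrow> complex) \<Rightarrow> (nat \<Rightarrow> 'h) \<Rightarrow> nat \<Rightarrow> complex \<Rightarrow> complex" where
  "gcomp a \<omega> 0 = id"
| "gcomp a \<omega> (Suc n) = gcomp a \<omega> n \<circ> a (\<omega> n)"

definition gstat :: "('h \<Rightarrow> complex \<Rightarrow> complex) \<Rightarrow> 'h measure \<Rightarrow> complex measure \<Rightarrow> bool" where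
  "gstat a nu \<mu> \<longleftrightarrow> (\<forall>A\<in>sets S1M. emeasure \<mu> A = (\<integral>\<^sup>+ f. emeasure (distr \<mu> S1M (a f)) A \<partial>nu))"

lemma gcomp_shift_pt: "gcomp a \<omega> (Suc n) x = a (\<omega> 0) (gcomp a (\<lambda>k. \<omega> (Suc k)) n x)"
proof (induction n arbitrary: x)
  case 0 show ?case by simp
next
  case (Suc n)
  have "gcomp a \<omega> (Suc (Suc n)) x = gcomp a \<omega> (Suc n) (a (\<omega> (Suc n)) x)" by simp
  also have "\<dots> = a (\<omega> 0) (gcomp a (\<lambda>k. \<omega> (Suc k)) n (a (\<omega> (Suc n)) x))" by (rule Suc)
  also have "\<dots> = a (\<omega> 0) (gcomp a (\<lambda>k. \<omega> (Suc k)) (Suc n) x)" by simp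
  finally show ?case .
qed

lemma space_S1M[simp]: "space S1M = S1"
  by (simp add: S1M_def space_restrict_space)

lemma S1_1: "1 \<in> S1" by (simp add: S1_def)

lemma closed_S1: "closed S1" by (simp add: S1_def)

lemma sets_S1M_sub: "A \<in> sets S1M \<Longrightarrow> A \<subseteq> S1"
  using sets.sets_into_space by fastforce


lemma S1_borel: "S1 \<in> sets borel" using closed_S1 by simp

lemma sets_S1M_iff: "A \<in> sets S1M \<longleftrightarrow> A \<subseteq> S1 \<and> A \<in> sets borel"
  unfolding S1M_def by (rule sets_restrict_space_iff) (simp add: S1_borel)

lemma phi_meas: "continuous_on UNIV (\<phi> :: complex \<Rightarrow> real) \<Longrightarrow> \<phi> \<in> borel_measurable S1M"
  unfolding S1M_def by (rule measurable_restrict_space1) (rule borel_measurable_continuous_onI)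

lemma phiC_cont: "continuous_on UNIV (\<lambda>z::complex. max 0 (1 - real k * infdist z C))"
  by (intro continuous_intros)

lemma phiC_bnd: "0 \<le> max 0 (1 - real k * infdist z C) \<and> max 0 (1 - real k * infdist z C) \<le> 1"
  using infdist_nonneg[of z C] by (auto simp: max_def)

lemma closed_limit:
  assumes rho: "prob_space \<rho>" "sets \<rho> = sets S1M" and C: "closed C" "C \<noteq> {}"
  shows "(\<lambda>k. \<integral>z. max 0 (1 - real k * infdist z C) \<partial>\<rho>) \<longlonglongrightarrow> measure \<rho> (C \<inter> S1)"
proof -
  interpret R: prob_space \<rho> by (rule rho(1))
  have sp: "space \<rho> = S1" using sets_eq_imp_space_eq[OF rho(2)] by simp
  have CS: "C \<inter> S1 \<in> sets \<rho>" using C(1) closed_S1 by (simp add: rho(2) sets_S1M_iff closed_Int borel_closed)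
  have "(\<lambda>k. \<integral>z. max 0 (1 - real k * infdist z C) \<partial>\<rho>) \<longlonglongrightarrow> (\<integral>z. indicator (C \<inter> S1) z \<partial>\<rho>)"
  proof (rule integral_dominated_convergence[where w="\<lambda>_. 1"])
    show "indicator (C \<inter> S1) \<in> borel_measurable \<rho>" using CS by simp
    show "(\<lambda>z. max 0 (1 - real k * infdist z C)) \<in> borel_measurable \<rho>" for k
      using phi_meas[OF phiC_cont[of k C]] by (simp add: measurable_cong_sets[OF rho(2) refl])
    show "integrable \<rho> (\<lambda>_. 1::real)" by simp
    show "AE z in \<rho>. norm (max 0 (1 - real k * infdist z C)) \<le> 1" for k
      using phiC_bnd[of k z C for z] by simp
    show "AE z in \<rho>. (\<lambda>k. max 0 (1 - real k * infdist z C)) \<longlonglongrightarrow> indicator (C \<inter> S1) z"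
    proof (rule AE_I2)
      fix z assume z: "z \<in> space \<rho>"
      show "(\<lambda>k. max 0 (1 - real k * infdist z C)) \<longlonglongrightarrow> indicator (C \<inter> S1) z"
      proof (cases "z \<in> C")
        case True
        then have "infdist z C = 0" using in_closed_iff_infdist_zero[OF C] by simp
        then show ?thesis using True z sp by simp
      next
        case False
        then have d: "infdist z C > 0"
          using in_closed_iff_infdist_zero[OF C] infdist_nonneg[of z C] by simp
        obtain N :: nat where N: "1 / infdist z C < real N" using reals_Archimedean2 by blast
        have "eventually (\<lambda>k. max 0 (1 - real k * infdist z C) = 0) sequentially"
          unfolding eventually_sequentially
        proof (intro exI allI impI)
          fix k assume "N \<le> k"
          then have "1 / infdist z C < real k" using N by linarith
          then have "1 < real k * infdist z C" using d by (simp add: field_simps)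
          then show "max 0 (1 - real k * infdist z C) = 0" by simp
        qed
        then have "(\<lambda>k. max 0 (1 - real k * infdist z C)) \<longlonglongrightarrow> 0" by (rule tendsto_eventually)
        then show ?thesis using False by simp
      qed
    qed
  qed
  then show ?thesis using CS sets.sets_into_space[OF CS] by (simp add: Int_absorb2)
qed

locale gsetup = prob_space nu for nu :: "'h measure" +
  fixes a :: "'h \<Rightarrow> complex \<Rightarrow> complex" and p :: "(nat \<Rightarrow> 'h) \<Rightarrow> complex"
  assumes am: "(\<lambda>(f,x). a f x) \<in> measurable (nu \<Otimes>\<^sub>M S1M) S1M"
  and acont: "\<And>f. f \<in> space nu \<Longrightarrow> continuous_on S1 (a f)"
  and pm: "p \<in> measurable (Pi\<^sub>M UNIV (\<lambda>_::nat. nu)) S1M"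
  and conv: "\<And>x. x \<in> S1 \<Longrightarrow> AE \<omega> in Pi\<^sub>M UNIV (\<lambda>_::nat. nu). (\<lambda>n. gcomp a \<omega> n x) \<longlonglongrightarrow> p \<omega>"
begin

sublocale S: sequence_space nu ..

abbreviation "P \<equiv> Pi\<^sub>M UNIV (\<lambda>_::nat. nu)"

lemma nu1: "emeasure nu (space nu) = 1"
  using prob_space_axioms by (rule prob_space.emeasure_space_1)

lemma am1: "f \<in> space nu \<Longrightarrow> a f \<in> measurable S1M S1M"
  using measurable_Pair2[OF am] by simp

lemma amap: "f \<in> space nu \<Longrightarrow> x \<in> S1 \<Longrightarrow> a f x \<in> S1"
  using measurable_space[OF am1] by fastforce

lemma space_P: "\<omega> \<in> space P \<Longrightarrow> \<omega> n \<in> space nu"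
  by (auto simp: space_PiM)

lemma gcomp_map: "\<omega> \<in> space P \<Longrightarrow> x \<in> S1 \<Longrightarrow> gcomp a \<omega> n x \<in> S1"
  by (induction n arbitrary: x) (auto simp: amap space_P)

lemma gcomp_meas: "(\<lambda>(\<omega>, y). gcomp a \<omega> n y) \<in> measurable (P \<Otimes>\<^sub>M S1M) S1M"
proof (induction n)
  case 0
  then show ?case by (simp add: id_def)
next
  case (Suc n)
  have m1: "(\<lambda>z. (fst z 0, snd z)) \<in> measurable (P \<Otimes>\<^sub>M S1M) (nu \<Otimes>\<^sub>M S1M)"
    by measurable
  have m2: "(\<lambda>z. (fst z, a (fst z n) (snd z))) \<in> measurable (P \<Otimes>\<^sub>M S1M) (P \<Otimes>\<^sub>M S1M)"
  proof (rule measurable_Pair)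
    show "fst \<in> measurable (P \<Otimes>\<^sub>M S1M) P" by measurable
    have "(\<lambda>z. (fst z n, snd z)) \<in> measurable (P \<Otimes>\<^sub>M S1M) (nu \<Otimes>\<^sub>M S1M)"
      by measurable
    from measurable_compose[OF this am] show "(\<lambda>z. a (fst z n) (snd z)) \<in> measurable (P \<Otimes>\<^sub>M S1M) S1M"
      by simp
  qed
  from measurable_compose[OF m2 Suc] show ?case
    by (simp add: split_beta')
qed

lemma cn_meas: "(\<lambda>(s, \<omega>). case_nat s \<omega>) \<in> measurable (nu \<Otimes>\<^sub>M P) P"
  by measurable

lemma shift_meas: "(\<lambda>\<omega>. \<lambda>k. \<omega> (Suc k)) \<in> measurable P P"
  by (rule measurable_PiM_single') (auto simp: space_PiM intro: measurable_component_singleton)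

lemma distr_shift: "distr P P (\<lambda>\<omega>. \<lambda>k. \<omega> (Suc k)) = P"
proof -
  interpret PP: pair_sigma_finite nu P ..
  have "distr P P (\<lambda>\<omega>. \<lambda>k. \<omega> (Suc k)) = distr (distr (nu \<Otimes>\<^sub>M P) P (\<lambda>(s, \<omega>). case_nat s \<omega>)) P (\<lambda>\<omega>. \<lambda>k. \<omega> (Suc k))"
    by (simp add: S.PiM_iter)
  also have "\<dots> = distr (nu \<Otimes>\<^sub>M P) P ((\<lambda>\<omega>. \<lambda>k. \<omega> (Suc k)) \<circ> (\<lambda>(s, \<omega>). case_nat s \<omega>))"
    by (rule distr_distr[OF shift_meas cn_meas])
  also have "\<dots> = distr (nu \<Otimes>\<^sub>M P) P snd"
    by (rule distr_cong) (auto simp: fun_eq_iff)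
  also have "\<dots> = P"
  proof (rule measure_eqI)
    fix A assume A: "A \<in> sets (distr (nu \<Otimes>\<^sub>M P) P snd)"
    then have A': "A \<in> sets P" by simp
    have "snd -` A \<inter> space (nu \<Otimes>\<^sub>M P) = space nu \<times> A"
      using sets.sets_into_space[OF A'] by (auto simp: space_pair_measure)
    then show "emeasure (distr (nu \<Otimes>\<^sub>M P) P snd) A = emeasure P A"
      using A' S.P.emeasure_pair_measure_Times[OF sets.top A', of nu] nu1 by (simp add: emeasure_distr)
  qed simp
  finally show ?thesis .
qed

lemma AE_shift:
  assumes "AE \<omega> in P. Q \<omega>"
  shows "AE \<omega> in P. Q (\<lambda>k. \<omega> (Suc k))"
proof -
  have "AE \<omega> in distr P P (\<lambda>\<omega>. \<lambda>k. \<omega> (Suc k)). Q \<omega>"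
    unfolding distr_shift by (rule assms)
  from AE_distrD[OF shift_meas this] show ?thesis .
qed

lemma p_space: "\<omega> \<in> space P \<Longrightarrow> p \<omega> \<in> S1"
  using measurable_space[OF pm] by fastforce

lemma p_eq: "AE \<omega> in P. p \<omega> = a (\<omega> 0) (p (\<lambda>k. \<omega> (Suc k)))"
proof -
  have x: "1 \<in> S1" by (rule S1_1)
  have A1: "AE \<omega> in P. (\<lambda>n. gcomp a \<omega> n 1) \<longlonglongrightarrow> p \<omega>" by (rule conv[OF x])
  have A2: "AE \<omega> in P. (\<lambda>n. gcomp a (\<lambda>k. \<omega> (Suc k)) n 1) \<longlonglongrightarrow> p (\<lambda>k. \<omega> (Suc k))"
    by (rule AE_shift[OF A1])
  show ?thesis
    using AE_space A1 A2
  proof eventually_elim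
    case (elim \<omega>)
    then have \<omega>: "\<omega> \<in> space P" by simp
    have sh: "(\<lambda>k. \<omega> (Suc k)) \<in> space P"
      using measurable_space[OF shift_meas \<omega>] .
    have "(\<lambda>n. a (\<omega> 0) (gcomp a (\<lambda>k. \<omega> (Suc k)) n 1)) \<longlonglongrightarrow> a (\<omega> 0) (p (\<lambda>k. \<omega> (Suc k)))"
      using continuous_on_tendsto_compose[OF acont[OF space_P[OF \<omega>]] elim(3) p_space[OF sh]]
        gcomp_map[OF sh x] by (simp add: o_def)
    then have "(\<lambda>n. gcomp a \<omega> (Suc n) 1) \<longlonglongrightarrow> a (\<omega> 0) (p (\<lambda>k. \<omega> (Suc k)))"
      by (simp only: gcomp_shift_pt)
    moreover have "(\<lambda>n. gcomp a \<omega> (Suc n) 1) \<longlonglongrightarrow> p \<omega>"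
      using elim(2) by (rule LIMSEQ_Suc)
    ultimately show ?case using LIMSEQ_unique by blast
  qed
qed

lemma eta_stat: "gstat a nu (distr P S1M p)"
  unfolding gstat_def
proof
  interpret PP: pair_sigma_finite nu P ..
  fix A assume A: "A \<in> sets S1M"
  have pa: "(\<lambda>\<omega>. a (\<omega> 0) (p (\<lambda>k. \<omega> (Suc k)))) \<in> measurable P S1M"
  proof -
    have "(\<lambda>\<omega>. (\<omega> 0, p (\<lambda>k. \<omega> (Suc k)))) \<in> measurable P (nu \<Otimes>\<^sub>M S1M)"
      by (rule measurable_Pair[OF measurable_component_singleton measurable_compose[OF shift_meas pm]]) simp
    from measurable_compose[OF this am] show ?thesis by simp
  qed
  have "emeasure (distr P S1M p) A = emeasure P (p -` A \<inter> space P)"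
    using A pm by (simp add: emeasure_distr)
  also have "\<dots> = emeasure P ((\<lambda>\<omega>. a (\<omega> 0) (p (\<lambda>k. \<omega> (Suc k)))) -` A \<inter> space P)"
  proof (rule emeasure_eq_AE)
    show "AE x in P. (x \<in> p -` A \<inter> space P) = (x \<in> (\<lambda>\<omega>. a (\<omega> 0) (p (\<lambda>k. \<omega> (Suc k)))) -` A \<inter> space P)"
      using p_eq
    proof eventually_elim
      case (elim x)
      show ?case by (simp only: vimage_eq Int_iff elim[symmetric])
    qed
  qed (simp_all add: measurable_sets[OF pm A] measurable_sets[OF pa A])
  also have "\<dots> = emeasure (distr (nu \<Otimes>\<^sub>M P) P (\<lambda>(s, \<omega>). case_nat s \<omega>)) ((\<lambda>\<omega>. a (\<omega> 0) (p (\<lambda>k. \<omega> (Suc k)))) -` A \<inter> space P)"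
    by (simp add: S.PiM_iter)
  also have "\<dots> = emeasure (nu \<Otimes>\<^sub>M P) ((\<lambda>(s, \<omega>). case_nat s \<omega>) -` ((\<lambda>\<omega>. a (\<omega> 0) (p (\<lambda>k. \<omega> (Suc k)))) -` A \<inter> space P) \<inter> space (nu \<Otimes>\<^sub>M P))"
    using A pa by (intro emeasure_distr[OF cn_meas]) auto
  also have "\<dots> = (\<integral>\<^sup>+ s. emeasure P (Pair s -` ((\<lambda>(s, \<omega>). case_nat s \<omega>) -` ((\<lambda>\<omega>. a (\<omega> 0) (p (\<lambda>k. \<omega> (Suc k)))) -` A \<inter> space P) \<inter> space (nu \<Otimes>\<^sub>M P))) \<partial>nu)"
    using A pa by (intro S.emeasure_pair_measure_alt measurable_sets[OF cn_meas]) auto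
  also have "\<dots> = (\<integral>\<^sup>+ s. emeasure (distr (distr P S1M p) S1M (a s)) A \<partial>nu)"
  proof (rule nn_integral_cong)
    fix s assume s: "s \<in> space nu"
    have "Pair s -` ((\<lambda>(s, \<omega>). case_nat s \<omega>) -` ((\<lambda>\<omega>. a (\<omega> 0) (p (\<lambda>k. \<omega> (Suc k)))) -` A \<inter> space P) \<inter> space (nu \<Otimes>\<^sub>M P))
        = p -` (a s -` A \<inter> S1) \<inter> space P"
    proof -
      have sp: "case_nat s x \<in> space P \<longleftrightarrow> x \<in> space P" for x
        unfolding space_PiM PiE_UNIV_domain Pi_iff
      proof (intro iffI ballI)
        fix i :: nat assume "\<forall>i\<in>UNIV. case_nat s x i \<in> space nu"
        then have "case_nat s x (Suc i) \<in> space nu" by blast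
        then show "x i \<in> space nu" by simp
      next
        fix i :: nat assume "\<forall>i\<in>UNIV. x i \<in> space nu"
        then show "case_nat s x i \<in> space nu" using s by (cases i) auto
      qed
      have sh: "(\<lambda>k. case_nat s x (Suc k)) = x" for x :: "nat \<Rightarrow> 'h"
        by (simp add: fun_eq_iff)
      show ?thesis
        using s p_space by (auto simp: space_pair_measure sp sh)
    qed
    moreover have "a s -` A \<inter> S1 \<in> sets S1M"
      using measurable_sets[OF am1[OF s] A] by simp
    ultimately show "emeasure P (Pair s -` ((\<lambda>(s, \<omega>). case_nat s \<omega>) -` ((\<lambda>\<omega>. a (\<omega> 0) (p (\<lambda>k. \<omega> (Suc k)))) -` A \<inter> space P) \<inter> space (nu \<Otimes>\<^sub>M P)))
      = emeasure (distr (distr P S1M p) S1M (a s)) A"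
      using A pm am1[OF s] by (simp add: emeasure_distr)
  qed
  finally show "emeasure (distr P S1M p) A = (\<integral>\<^sup>+ s. emeasure (distr (distr P S1M p) S1M (a s)) A \<partial>nu)" .
qed

end

locale gunique = gsetup +
  fixes \<mu> :: "complex measure"
  assumes mu_prob: "prob_space \<mu>" and mu_sets: "sets \<mu> = sets S1M" and mu_stat: "gstat a nu \<mu>"
begin

interpretation M: prob_space \<mu> by (rule mu_prob)

lemma space_mu: "space \<mu> = S1"
  using sets_eq_imp_space_eq[OF mu_sets] by simp

lemma mu_a: "f \<in> space nu \<Longrightarrow> B \<in> sets S1M \<Longrightarrow> emeasure (distr \<mu> S1M (a f)) B = emeasure \<mu> (a f -` B \<inter> S1)"
  using am1[of f] by (subst emeasure_distr) (auto simp: space_mu measurable_cong_sets[OF mu_sets refl])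

lemma G_meas': "(\<lambda>(\<omega>, y). gcomp a \<omega> n y) \<in> measurable (P \<Otimes>\<^sub>M \<mu>) S1M"
  using gcomp_meas[of n] by (simp add: measurable_cong_sets[OF sets_pair_measure_cong[OF refl mu_sets] refl])

lemma sec_eq: "\<omega> \<in> space P \<Longrightarrow> Pair \<omega> -` ((\<lambda>(\<omega>, y). gcomp a \<omega> n y) -` B \<inter> space (P \<Otimes>\<^sub>M \<mu>)) = gcomp a \<omega> n -` B \<inter> S1"
  by (auto simp: space_pair_measure space_mu)

lemma sec_meas: "B \<in> sets S1M \<Longrightarrow> (\<lambda>\<omega>. emeasure \<mu> (gcomp a \<omega> n -` B \<inter> S1)) \<in> borel_measurable P"
proof -
  assume B: "B \<in> sets S1M"
  have "(\<lambda>(\<omega>, y). gcomp a \<omega> n y) -` B \<inter> space (P \<Otimes>\<^sub>M \<mu>) \<in> sets (P \<Otimes>\<^sub>M \<mu>)"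
    using measurable_sets[OF G_meas' B] .
  from M.measurable_emeasure_Pair[OF this] show ?thesis
    by (rule measurable_cong[THEN iffD1, rotated]) (simp only: sec_eq)
qed

lemma iter: "B \<in> sets S1M \<Longrightarrow> emeasure \<mu> B = (\<integral>\<^sup>+\<omega>. emeasure \<mu> (gcomp a \<omega> n -` B \<inter> S1) \<partial>P)"
proof (induction n arbitrary: B)
  case 0
  have "B \<subseteq> S1" using sets_S1M_sub[OF 0] .
  then have "id -` B \<inter> S1 = B" by auto
  then show ?case using S.P.emeasure_space_1 by simp
next
  case (Suc n)
  let ?F = "\<lambda>\<omega>. emeasure \<mu> (gcomp a \<omega> (Suc n) -` B \<inter> S1)"
  have Fm: "?F \<in> borel_measurable P" by (rule sec_meas[OF Suc.prems])
  have "(\<integral>\<^sup>+\<omega>. ?F \<omega> \<partial>P) = (\<integral>\<^sup>+\<omega>. ?F \<omega> \<partial>distr (nu \<Otimes>\<^sub>M P) P (\<lambda>(s, \<omega>). case_nat s \<omega>))"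
    by (simp add: S.PiM_iter)
  also have "\<dots> = (\<integral>\<^sup>+z. ?F (case_prod case_nat z) \<partial>(nu \<Otimes>\<^sub>M P))"
    using Fm by (intro nn_integral_distr[OF cn_meas]) simp
  also have "\<dots> = (\<integral>\<^sup>+s. \<integral>\<^sup>+\<omega>. ?F (case_nat s \<omega>) \<partial>P \<partial>nu)"
    using S.P.nn_integral_fst[OF measurable_compose[OF cn_meas Fm]] by simp
  also have "\<dots> = (\<integral>\<^sup>+s. emeasure \<mu> (a s -` B \<inter> S1) \<partial>nu)"
  proof (rule nn_integral_cong)
    fix s assume s: "s \<in> space nu"
    have Bs: "a s -` B \<inter> S1 \<in> sets S1M"
      using measurable_sets[OF am1[OF s] Suc.prems] by simp
    have "(\<integral>\<^sup>+\<omega>. ?F (case_nat s \<omega>) \<partial>P) = (\<integral>\<^sup>+\<omega>. emeasure \<mu> (gcomp a \<omega> n -` (a s -` B \<inter> S1) \<inter> S1) \<partial>P)"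
    proof (rule nn_integral_cong)
      fix \<omega> assume \<omega>: "\<omega> \<in> space P"
      have sh: "(\<lambda>k. case_nat s \<omega> (Suc k)) = \<omega>" by (simp add: fun_eq_iff)
      have eq: "gcomp a (case_nat s \<omega>) (Suc n) x = a s (gcomp a \<omega> n x)" for x
        by (subst gcomp_shift_pt) (simp add: sh)
      have "gcomp a (case_nat s \<omega>) (Suc n) -` B \<inter> S1 = gcomp a \<omega> n -` (a s -` B \<inter> S1) \<inter> S1"
        using gcomp_map[OF \<omega>] by (auto simp del: gcomp.simps simp: eq)
      then show "?F (case_nat s \<omega>) = emeasure \<mu> (gcomp a \<omega> n -` (a s -` B \<inter> S1) \<inter> S1)" by simp
    qed
    also have "\<dots> = emeasure \<mu> (a s -` B \<inter> S1)"
      by (rule Suc.IH[OF Bs, symmetric])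
    finally show "(\<integral>\<^sup>+\<omega>. ?F (case_nat s \<omega>) \<partial>P) = emeasure \<mu> (a s -` B \<inter> S1)" .
  qed
  also have "\<dots> = (\<integral>\<^sup>+s. emeasure (distr \<mu> S1M (a s)) B \<partial>nu)"
    by (rule nn_integral_cong) (simp add: mu_a Suc.prems)
  also have "\<dots> = emeasure \<mu> B"
    using mu_stat Suc.prems unfolding gstat_def by simp
  finally show ?case by (rule sym)
qed

lemma mu_distr: "\<mu> = distr (P \<Otimes>\<^sub>M \<mu>) S1M (\<lambda>(\<omega>, y). gcomp a \<omega> n y)"
proof (rule measure_eqI)
  show "sets \<mu> = sets (distr (P \<Otimes>\<^sub>M \<mu>) S1M (\<lambda>(\<omega>, y). gcomp a \<omega> n y))"
    by (simp add: mu_sets)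
next
  fix B assume "B \<in> sets \<mu>"
  then have B: "B \<in> sets S1M" by (simp add: mu_sets)
  have "emeasure (distr (P \<Otimes>\<^sub>M \<mu>) S1M (\<lambda>(\<omega>, y). gcomp a \<omega> n y)) B
      = emeasure (P \<Otimes>\<^sub>M \<mu>) ((\<lambda>(\<omega>, y). gcomp a \<omega> n y) -` B \<inter> space (P \<Otimes>\<^sub>M \<mu>))"
    by (rule emeasure_distr[OF G_meas' B])
  also have "\<dots> = (\<integral>\<^sup>+\<omega>. emeasure \<mu> (Pair \<omega> -` ((\<lambda>(\<omega>, y). gcomp a \<omega> n y) -` B \<inter> space (P \<Otimes>\<^sub>M \<mu>))) \<partial>P)"
    by (rule M.emeasure_pair_measure_alt[OF measurable_sets[OF G_meas' B]])
  also have "\<dots> = (\<integral>\<^sup>+\<omega>. emeasure \<mu> (gcomp a \<omega> n -` B \<inter> S1) \<partial>P)"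
    by (rule nn_integral_cong) (simp only: sec_eq)
  also have "\<dots> = emeasure \<mu> B" by (rule iter[OF B, symmetric])
  finally show "emeasure \<mu> B = emeasure (distr (P \<Otimes>\<^sub>M \<mu>) S1M (\<lambda>(\<omega>, y). gcomp a \<omega> n y)) B" by simp
qed


lemma integral_eq:
  fixes \<phi> :: "complex \<Rightarrow> real"
  assumes cont: "continuous_on UNIV \<phi>" and bnd: "\<And>z. 0 \<le> \<phi> z \<and> \<phi> z \<le> 1"
  shows "(\<integral>y. \<phi> y \<partial>\<mu>) = (\<integral>\<omega>. \<phi> (p \<omega>) \<partial>P)"
proof -
  interpret PM: pair_sigma_finite P \<mu> ..
  have \<phi>m: "\<phi> \<in> borel_measurable S1M" by (rule phi_meas[OF cont])
  have fin: "finite_measure (P \<Otimes>\<^sub>M \<mu>)"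
    by (rule prob_space.finite_measure, rule prob_space_pair) (rule S.P.prob_space_axioms, rule mu_prob)
  let ?I = "\<lambda>n y. \<integral>\<omega>. \<phi> (gcomp a \<omega> n y) \<partial>P"
  let ?c = "\<integral>\<omega>. \<phi> (p \<omega>) \<partial>P"
  have Gm: "(\<lambda>z. \<phi> (case z of (\<omega>, y) \<Rightarrow> gcomp a \<omega> n y)) \<in> borel_measurable (P \<Otimes>\<^sub>M \<mu>)" for n
    using measurable_compose[OF G_meas' \<phi>m] by simp
  have eq: "(\<integral>y. \<phi> y \<partial>\<mu>) = (\<integral>y. ?I n y \<partial>\<mu>)" for n
  proof -
    have "(\<integral>y. \<phi> y \<partial>\<mu>) = (\<integral>y. \<phi> y \<partial>distr (P \<Otimes>\<^sub>M \<mu>) S1M (\<lambda>(\<omega>, y). gcomp a \<omega> n y))"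
      by (subst mu_distr[of n]) (rule refl)
    also have "\<dots> = (\<integral>z. \<phi> (case z of (\<omega>, y) \<Rightarrow> gcomp a \<omega> n y) \<partial>(P \<Otimes>\<^sub>M \<mu>))"
      by (rule integral_distr[OF G_meas' \<phi>m])
    also have "\<dots> = (\<integral>y. ?I n y \<partial>\<mu>)"
    proof -
      have int: "integrable (P \<Otimes>\<^sub>M \<mu>) (case_prod (\<lambda>\<omega> y. \<phi> (gcomp a \<omega> n y)))"
        by (rule finite_measure.integrable_const_bound[OF fin, where B=1])
           (use bnd Gm[of n] in \<open>auto simp: split_beta'\<close>)
      show ?thesis using PM.integral_snd[OF int] by (simp add: split_beta')
    qed
    finally show ?thesis .
  qed
  have inner: "(\<lambda>n. ?I n y) \<longlonglongrightarrow> ?c" if y: "y \<in> S1" for y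
  proof (rule integral_dominated_convergence[where w="\<lambda>_. 1"])
    show "(\<lambda>\<omega>. \<phi> (p \<omega>)) \<in> borel_measurable P"
      using measurable_compose[OF pm \<phi>m] .
    show "(\<lambda>\<omega>. \<phi> (gcomp a \<omega> n y)) \<in> borel_measurable P" for n
      using measurable_compose[OF measurable_Pair1[OF gcomp_meas[of n], of y] \<phi>m] y by simp
    show "integrable P (\<lambda>_. 1::real)" by simp
    show "AE \<omega> in P. (\<lambda>n. \<phi> (gcomp a \<omega> n y)) \<longlonglongrightarrow> \<phi> (p \<omega>)"
      using conv[OF y]
    proof eventually_elim
      case (elim \<omega>)
      show ?case using continuous_on_tendsto_compose[OF cont elim] by (simp add: o_def)
    qed
    show "AE \<omega> in P. norm (\<phi> (gcomp a \<omega> n y)) \<le> 1" for n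
      using bnd by (simp add: abs_le_iff)
  qed
  have outer: "(\<lambda>n. \<integral>y. ?I n y \<partial>\<mu>) \<longlonglongrightarrow> (\<integral>y. ?c \<partial>\<mu>)"
  proof (rule integral_dominated_convergence[where w="\<lambda>_. 1"])
    show "(\<lambda>y. ?c) \<in> borel_measurable \<mu>" by simp
    show "?I n \<in> borel_measurable \<mu>" for n
    proof -
      have "(\<lambda>(y, \<omega>). \<phi> (gcomp a \<omega> n y)) \<in> borel_measurable (\<mu> \<Otimes>\<^sub>M P)"
        using measurable_compose[OF measurable_pair_swap' Gm[of n]] by (simp add: split_beta')
      then show ?thesis by (rule S.P.borel_measurable_lebesgue_integral)
    qed
    show "integrable \<mu> (\<lambda>_. 1::real)" by simp
    show "AE y in \<mu>. (\<lambda>n. ?I n y) \<longlonglongrightarrow> ?c"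
      by (rule AE_I2) (simp add: inner space_mu)
    show "AE y in \<mu>. norm (?I n y) \<le> 1" for n
    proof (rule AE_I2)
      fix y
      have "\<bar>?I n y\<bar> \<le> (\<integral>\<omega>. \<bar>\<phi> (gcomp a \<omega> n y)\<bar> \<partial>P)" by (rule integral_abs_bound)
      also have "\<dots> \<le> (\<integral>\<omega>. 1 \<partial>P)"
        using bnd by (intro integral_mono') (auto simp: abs_le_iff intro: order_trans)
      finally show "norm (?I n y) \<le> 1" by (simp add: S.P.prob_space)
    qed
  qed
  have "(\<lambda>n. \<integral>y. ?I n y \<partial>\<mu>) = (\<lambda>n. \<integral>y. \<phi> y \<partial>\<mu>)" using eq by simp
  with outer have "(\<lambda>n. \<integral>y. \<phi> y \<partial>\<mu>) \<longlonglongrightarrow> ?c" by (simp add: M.prob_space)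
  then show ?thesis using LIMSEQ_const_iff by blast
qed

abbreviation "\<eta> \<equiv> distr P S1M p"

lemma eta_prob: "prob_space \<eta>"
  by (rule S.P.prob_space_distr[OF pm])

lemma closed_eq: "closed C \<Longrightarrow> emeasure \<mu> (C \<inter> S1) = emeasure \<eta> (C \<inter> S1)"
proof -
  assume C: "closed C"
  show ?thesis
  proof (cases "C = {}")
    case True then show ?thesis by simp
  next
    case False
    interpret E: prob_space \<eta> by (rule eta_prob)
    have l1: "(\<lambda>k. \<integral>z. max 0 (1 - real k * infdist z C) \<partial>\<mu>) \<longlonglongrightarrow> measure \<mu> (C \<inter> S1)"
      by (rule closed_limit[OF mu_prob mu_sets C False])
    have l2: "(\<lambda>k. \<integral>z. max 0 (1 - real k * infdist z C) \<partial>\<eta>) \<longlonglongrightarrow> measure \<eta> (C \<inter> S1)"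
      by (rule closed_limit[OF eta_prob _ C False]) simp
    have "(\<integral>z. max 0 (1 - real k * infdist z C) \<partial>\<mu>) = (\<integral>z. max 0 (1 - real k * infdist z C) \<partial>\<eta>)" for k
      using integral_eq[OF phiC_cont phiC_bnd] integral_distr[OF pm phi_meas[OF phiC_cont]] by simp
    with l1 have "(\<lambda>k. \<integral>z. max 0 (1 - real k * infdist z C) \<partial>\<eta>) \<longlonglongrightarrow> measure \<mu> (C \<inter> S1)" by simp
    with l2 have "measure \<mu> (C \<inter> S1) = measure \<eta> (C \<inter> S1)" using LIMSEQ_unique by blast
    then show ?thesis by (simp add: M.emeasure_eq_measure E.emeasure_eq_measure)
  qed
qed

lemma mu_eq: "\<mu> = \<eta>"
proof -
  interpret E: prob_space \<eta> by (rule eta_prob)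
  have idm: "(\<lambda>x. x) \<in> measurable S1M borel"
    unfolding S1M_def by (rule measurable_restrict_space1) simp
  have idm1: "(\<lambda>x. x) \<in> measurable \<mu> borel" using idm by (simp add: measurable_cong_sets[OF mu_sets refl])
  have idm2: "(\<lambda>x. x) \<in> measurable \<eta> borel" using idm by simp
  have exteq: "distr \<mu> borel (\<lambda>x. x) = distr \<eta> borel (\<lambda>x. x)"
  proof (rule measure_eqI_generator_eq[where E="Collect closed" and \<Omega>=UNIV and A="\<lambda>_. UNIV"])
    show "Int_stable (Collect closed)" by (auto simp: Int_stable_def)
    show "Collect closed \<subseteq> Pow UNIV" by simp
    fix X :: "complex set" assume "X \<in> Collect closed"
    then show "emeasure (distr \<mu> borel (\<lambda>x. x)) X = emeasure (distr \<eta> borel (\<lambda>x. x)) X"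
      using closed_eq[of X] by (simp add: emeasure_distr[OF idm1] emeasure_distr[OF idm2] space_mu Int_commute)
  next
    show "sets (distr \<mu> borel (\<lambda>x. x)) = sigma_sets UNIV (Collect closed)"
      by (simp add: borel_eq_closed)
    show "sets (distr \<eta> borel (\<lambda>x. x)) = sigma_sets UNIV (Collect closed)"
      by (simp add: borel_eq_closed)
    show "range (\<lambda>_. UNIV) \<subseteq> Collect closed" by simp
    show "(\<Union>i. UNIV) = UNIV" by simp
    show "emeasure (distr \<mu> borel (\<lambda>x. x)) UNIV \<noteq> \<infinity>" for i :: nat
      by (simp add: emeasure_distr[OF idm1])
  qed
  show ?thesis
  proof (rule measure_eqI)
    show "sets \<mu> = sets \<eta>" by (simp add: mu_sets)
    fix A assume "A \<in> sets \<mu>"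
    then have A: "A \<subseteq> S1" "A \<in> sets borel" by (auto simp: mu_sets sets_S1M_iff)
    have "emeasure \<mu> A = emeasure (distr \<mu> borel (\<lambda>x. x)) A"
      using A by (simp add: emeasure_distr[OF idm1] space_mu Int_absorb2)
    also have "\<dots> = emeasure (distr \<eta> borel (\<lambda>x. x)) A" by (simp add: exteq)
    also have "\<dots> = emeasure \<eta> A"
      using A by (simp add: emeasure_distr[OF idm2] Int_absorb2)
    finally show "emeasure \<mu> A = emeasure \<eta> A" .
  qed
qed

end


lemma generic:
  assumes "prob_space nu"
    and "(\<lambda>(f,x). a f x) \<in> measurable (nu \<Otimes>\<^sub>M S1M) S1M"
    and "\<And>f. f \<in> space nu \<Longrightarrow> continuous_on S1 (a f)"
    and "p \<in> measurable (Pi\<^sub>M UNIV (\<lambda>_::nat. nu)) S1M"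
    and "\<And>x. x \<in> S1 \<Longrightarrow> AE \<omega> in Pi\<^sub>M UNIV (\<lambda>_::nat. nu). (\<lambda>n. gcomp a \<omega> n x) \<longlonglongrightarrow> p \<omega>"
  shows "gstat a nu (distr (Pi\<^sub>M UNIV (\<lambda>_::nat. nu)) S1M p)
     \<and> (\<forall>\<mu>. prob_space \<mu> \<and> sets \<mu> = sets S1M \<and> gstat a nu \<mu> \<longrightarrow> \<mu> = distr (Pi\<^sub>M UNIV (\<lambda>_::nat. nu)) S1M p)"
proof -
  have gs: "gsetup nu a p"
    by (rule gsetup.intro[OF assms(1) gsetup_axioms.intro[OF assms(2-5)]])
  interpret gsetup nu a p by (rule gs)
  show ?thesis
  proof (intro conjI allI impI)
    show "gstat a nu (distr P S1M p)" by (rule eta_stat)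
    fix \<mu> assume mu: "prob_space \<mu> \<and> sets \<mu> = sets S1M \<and> gstat a nu \<mu>"
    have gu: "gunique nu a p \<mu>"
      by (rule gunique.intro[OF gs gunique_axioms.intro]) (use mu in blast)+
    interpret gunique nu a p \<mu> by (rule gu)
    show "\<mu> = distr P S1M p" by (rule mu_eq)
  qed
qed



lemma space_HomM: "space HomM = Hom"
  unfolding HomM_def by (auto simp: space_restrict_space space_PiM Hom_def PiE_def)

lemma Hom_homeo: "f \<in> Hom \<Longrightarrow> \<exists>g. homeomorphism S1 S1 f g"
  by (simp add: Hom_def)

lemma Hom_cont: "f \<in> Hom \<Longrightarrow> continuous_on S1 f"
proof -
  assume "f \<in> Hom"
  then obtain g where "homeomorphism S1 S1 f g" using Hom_homeo by blast
  then show ?thesis by (simp add: homeomorphism_def)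
qed

lemma Hom_map: "f \<in> Hom \<Longrightarrow> x \<in> S1 \<Longrightarrow> f x \<in> S1"
proof -
  assume "f \<in> Hom" "x \<in> S1"
  obtain g where h: "homeomorphism S1 S1 f g" using Hom_homeo \<open>f \<in> Hom\<close> by blast
  have e: "f ` S1 = S1" by (rule homeomorphism_image1[OF h])
  have "f x \<in> f ` S1" using \<open>x \<in> S1\<close> by (rule imageI)
  then show ?thesis using e by simp
qed

lemma hinv_eq: "homeomorphism S1 S1 f g \<Longrightarrow> y \<in> S1 \<Longrightarrow> hinv f y = g y"
proof -
  assume h: "homeomorphism S1 S1 f g" and y: "y \<in> S1"
  have inj: "inj_on f S1" by (rule inj_on_inverseI[of S1 g]) (rule homeomorphism_apply1[OF h])
  have e: "g ` S1 = S1" by (rule homeomorphism_image2[OF h])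
  have "g y \<in> g ` S1" using y by (rule imageI)
  then have "g y \<in> S1" using e by simp
  have "f (g y) = y" by (rule homeomorphism_apply2[OF h y])
  then show ?thesis using y inj \<open>g y \<in> S1\<close> by (simp add: hinv_def inv_into_f_eq)
qed

lemma hinv_cont: "f \<in> Hom \<Longrightarrow> continuous_on S1 (hinv f)"
proof -
  assume "f \<in> Hom"
  then obtain g where h: "homeomorphism S1 S1 f g" using Hom_homeo by blast
  then have "continuous_on S1 g" by (simp add: homeomorphism_def)
  then show ?thesis by (rule continuous_on_eq) (simp add: hinv_eq[OF h])
qed

lemma eval_at_meas: "z \<in> S1 \<Longrightarrow> (\<lambda>h. h z) \<in> borel_measurable HomM"
  unfolding HomM_def by (rule measurable_restrict_space1) (rule measurable_component_singleton)

lemma idm: "(\<lambda>x. x) \<in> borel_measurable S1M"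
  unfolding S1M_def by (rule measurable_restrict_space1) simp

lemma snd_borel: "(\<lambda>\<xi>. snd \<xi>) \<in> borel_measurable (HomM \<Otimes>\<^sub>M S1M)"
  by (rule measurable_compose[OF measurable_snd idm])

lemma fst_at_meas: "z \<in> S1 \<Longrightarrow> (\<lambda>\<xi>. fst \<xi> z) \<in> borel_measurable (HomM \<Otimes>\<^sub>M S1M)"
  by (rule measurable_compose[OF measurable_fst], rule eval_at_meas)

definition qk :: "nat \<Rightarrow> complex \<Rightarrow> int \<times> int" where
  "qk k z = (\<lfloor>real (Suc k) * Re z\<rfloor>, \<lfloor>real (Suc k) * Im z\<rfloor>)"

definition wk :: "nat \<Rightarrow> int \<times> int \<Rightarrow> complex" where
  "wk k ij = Complex (of_int (fst ij) / real (Suc k)) (of_int (snd ij) / real (Suc k))"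

definition Qp :: "nat \<Rightarrow> int \<times> int \<Rightarrow> complex" where
  "Qp k ij = (if wk k ij = 0 then 1 else wk k ij / of_real (cmod (wk k ij)))"

lemma Qp_S1: "Qp k ij \<in> S1"
  by (auto simp: Qp_def S1_def norm_divide)

lemma floor_lim: "(\<lambda>k. of_int \<lfloor>real (Suc k) * t\<rfloor> / real (Suc k)) \<longlonglongrightarrow> t"
proof (rule tendsto_sandwich[of "\<lambda>k. t - inverse (real (Suc k))" _ _ "\<lambda>k. t"])
  show "\<forall>\<^sub>F k in sequentially. t - inverse (real (Suc k)) \<le> of_int \<lfloor>real (Suc k) * t\<rfloor> / real (Suc k)"
  proof (intro always_eventually allI)
    fix k
    have c: "0 < real (Suc k)" by simp
    have "real (Suc k) * t - 1 \<le> of_int \<lfloor>real (Suc k) * t\<rfloor>"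
      using floor_correct[of "real (Suc k) * t"] by linarith
    then have "(real (Suc k) * t - 1) / real (Suc k) \<le> of_int \<lfloor>real (Suc k) * t\<rfloor> / real (Suc k)"
      by (rule divide_right_mono) (use c in simp)
    moreover have "(real (Suc k) * t - 1) / real (Suc k) = t - inverse (real (Suc k))"
      using c by (simp add: field_simps)
    ultimately show "t - inverse (real (Suc k)) \<le> of_int \<lfloor>real (Suc k) * t\<rfloor> / real (Suc k)"
      by simp
  qed
  show "\<forall>\<^sub>F k in sequentially. of_int \<lfloor>real (Suc k) * t\<rfloor> / real (Suc k) \<le> t"
  proof (intro always_eventually allI)
    fix k
    have "of_int \<lfloor>real (Suc k) * t\<rfloor> \<le> real (Suc k) * t" by simp
    then show "of_int \<lfloor>real (Suc k) * t\<rfloor> / real (Suc k) \<le> t"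
      by (simp add: field_simps)
  qed
  show "(\<lambda>k. t - inverse (real (Suc k))) \<longlonglongrightarrow> t"
    using tendsto_diff[OF tendsto_const LIMSEQ_inverse_real_of_nat, of t] by simp
qed simp

lemma Qp_lim: "x \<in> S1 \<Longrightarrow> (\<lambda>k. Qp k (qk k x)) \<longlonglongrightarrow> x"
proof -
  assume x: "x \<in> S1"
  then have nx: "cmod x = 1" by (simp add: S1_def)
  then have x0: "x \<noteq> 0" by auto
  have w: "(\<lambda>k. wk k (qk k x)) \<longlonglongrightarrow> x"
    unfolding wk_def qk_def using tendsto_Complex[OF floor_lim floor_lim, of "Re x" "Im x"] by simp
  have ev: "eventually (\<lambda>k. wk k (qk k x) \<noteq> 0) sequentially"
    by (rule tendsto_imp_eventually_ne[OF w x0])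
  have "(\<lambda>k. wk k (qk k x) / of_real (cmod (wk k (qk k x)))) \<longlonglongrightarrow> x / of_real (cmod x)"
    by (intro tendsto_intros w) (simp add: nx)
  then have l: "(\<lambda>k. wk k (qk k x) / of_real (cmod (wk k (qk k x)))) \<longlonglongrightarrow> x" by (simp add: nx)
  show ?thesis
    by (rule Lim_transform_eventually[OF l]) (use ev in \<open>eventually_elim, simp add: Qp_def\<close>)
qed

lemma qk_meas: "qk k \<in> measurable S1M (count_space UNIV)"
proof -
  have [measurable]: "Re \<in> borel_measurable S1M" "Im \<in> borel_measurable S1M"
    using measurable_compose[OF idm borel_measurable_Re] measurable_compose[OF idm borel_measurable_Im] by simp_all
  show ?thesis
    unfolding measurable_count_space_eq2_countable
  proof (intro conjI ballI)
    show "qk k \<in> space S1M \<rightarrow> UNIV" by simp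
    fix ij :: "int \<times> int"
    obtain i j where ij: "ij = (i, j)" by (cases ij)
    have "qk k -` {ij} \<inter> space S1M = {z \<in> space S1M. of_int i \<le> real (Suc k) * Re z \<and> real (Suc k) * Re z < of_int i + 1
        \<and> of_int j \<le> real (Suc k) * Im z \<and> real (Suc k) * Im z < of_int j + 1}"
      by (auto simp: qk_def ij floor_eq_iff)
    also have "\<dots> = S1 \<inter> ({z. of_int i \<le> real (Suc k) * Re z} \<inter> {z. real (Suc k) * Re z < of_int i + 1}
        \<inter> {z. of_int j \<le> real (Suc k) * Im z} \<inter> {z. real (Suc k) * Im z < of_int j + 1})"
      by auto
    also have "\<dots> \<in> sets S1M"
      unfolding sets_S1M_iff
    proof (intro conjI sets.Int)
      show "{z. of_int i \<le> real (Suc k) * Re z} \<in> sets borel"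
        by (intro borel_closed closed_Collect_le continuous_intros)
      show "{z. of_int j \<le> real (Suc k) * Im z} \<in> sets borel"
        by (intro borel_closed closed_Collect_le continuous_intros)
      show "{z. real (Suc k) * Re z < of_int i + 1} \<in> sets borel"
        by (intro borel_open open_Collect_less continuous_intros)
      show "{z. real (Suc k) * Im z < of_int j + 1} \<in> sets borel"
        by (intro borel_open open_Collect_less continuous_intros)
    qed (auto simp: S1_borel)
    finally show "qk k -` {ij} \<inter> space S1M \<in> sets S1M" .
  qed
qed

lemma eval_meas: "(\<lambda>(f, x). f x) \<in> measurable (HomM \<Otimes>\<^sub>M S1M) S1M"
proof -
  have sp: "space (HomM \<Otimes>\<^sub>M S1M) = Hom \<times> S1" by (simp add: space_pair_measure space_HomM)
  have E: "(\<lambda>\<xi>. fst \<xi> (Qp k (qk k (snd \<xi>)))) \<in> borel_measurable (HomM \<Otimes>\<^sub>M S1M)" for k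
  proof (rule measurable_compose_countable'[where f="\<lambda>ij \<xi>. fst \<xi> (Qp k ij)" and g="\<lambda>\<xi>. qk k (snd \<xi>)" and I=UNIV])
    show "(\<lambda>\<xi>. fst \<xi> (Qp k ij)) \<in> borel_measurable (HomM \<Otimes>\<^sub>M S1M)" for ij
      by (rule fst_at_meas[OF Qp_S1])
    show "(\<lambda>\<xi>. qk k (snd \<xi>)) \<in> measurable (HomM \<Otimes>\<^sub>M S1M) (count_space UNIV)"
      by (rule measurable_compose[OF measurable_snd qk_meas])
  qed simp
  have "(\<lambda>\<xi>. fst \<xi> (snd \<xi>)) \<in> borel_measurable (HomM \<Otimes>\<^sub>M S1M)"
  proof (rule borel_measurable_LIMSEQ_metric[OF E])
    fix \<xi> assume "\<xi> \<in> space (HomM \<Otimes>\<^sub>M S1M)"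
    then have f: "fst \<xi> \<in> Hom" and x: "snd \<xi> \<in> S1" by (auto simp: sp)
    show "(\<lambda>k. fst \<xi> (Qp k (qk k (snd \<xi>)))) \<longlonglongrightarrow> fst \<xi> (snd \<xi>)"
      using continuous_on_tendsto_compose[OF Hom_cont[OF f] Qp_lim[OF x] x] Qp_S1 by (simp add: o_def)
  qed
  moreover have "(\<lambda>\<xi>. fst \<xi> (snd \<xi>)) \<in> space (HomM \<Otimes>\<^sub>M S1M) \<rightarrow> S1"
    using Hom_map by (auto simp: sp)
  ultimately have "(\<lambda>\<xi>. fst \<xi> (snd \<xi>)) \<in> measurable (HomM \<Otimes>\<^sub>M S1M) (restrict_space borel S1)"
    by (intro measurable_restrict_space2)
  then have "(\<lambda>\<xi>. fst \<xi> (snd \<xi>)) \<in> measurable (HomM \<Otimes>\<^sub>M S1M) S1M"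
    by (simp only: S1M_def[symmetric])
  then show ?thesis by (simp add: split_beta')
qed


lemma hinv_key:
  fixes C D :: "complex set"
  assumes C: "closed C" "C \<subseteq> S1" and D: "D \<subseteq> C" "C \<subseteq> closure D"
    and f: "f \<in> Hom" and y: "y \<in> S1"
  shows "hinv f y \<in> C \<longleftrightarrow> (INF x\<in>D. ennreal (cmod (f x - y))) = 0"
proof -
  obtain g where h: "homeomorphism S1 S1 f g" using Hom_homeo[OF f] by blast
  have hy: "hinv f y = g y" by (rule hinv_eq[OF h y])
  have gS: "g ` S1 = S1" by (rule homeomorphism_image2[OF h])
  have gy: "g y \<in> S1" using imageI[of y S1 g] y gS by simp
  have fc: "continuous_on S1 f" and gc: "continuous_on S1 g" using h by (simp_all add: homeomorphism_def)
  have DS: "D \<subseteq> S1" using D C by blast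
  show ?thesis
  proof
    assume "hinv f y \<in> C"
    then have "g y \<in> closure D" using hy D by auto
    then obtain xs where xs: "\<And>n. xs n \<in> D" "xs \<longlonglongrightarrow> g y"
      unfolding closure_sequential by blast
    have ev: "eventually (\<lambda>n. xs n \<in> S1) sequentially" using xs(1) DS by (intro always_eventually) blast
    have "(\<lambda>n. f (xs n)) \<longlonglongrightarrow> f (g y)"
      using continuous_on_tendsto_compose[OF fc xs(2) gy ev] by (simp add: o_def)
    then have "(\<lambda>n. f (xs n)) \<longlonglongrightarrow> y" using homeomorphism_apply2[OF h y] by simp
    then have "(\<lambda>n. f (xs n) - y) \<longlonglongrightarrow> 0" by (rule LIM_zero)
    then have "(\<lambda>n. cmod (f (xs n) - y)) \<longlonglongrightarrow> 0" by (rule tendsto_norm_zero)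
    then have lim: "(\<lambda>n. ennreal (cmod (f (xs n) - y))) \<longlonglongrightarrow> 0"
      using tendsto_ennrealI[of "\<lambda>n. cmod (f (xs n) - y)" 0 sequentially] by simp
    have "(INF x\<in>D. ennreal (cmod (f x - y))) \<le> 0"
      by (rule LIMSEQ_le_const[OF lim]) (use xs(1) in \<open>auto intro: INF_lower\<close>)
    then show "(INF x\<in>D. ennreal (cmod (f x - y))) = 0" by simp
  next
    assume inf0: "(INF x\<in>D. ennreal (cmod (f x - y))) = 0"
    have "\<forall>n. \<exists>x\<in>D. ennreal (cmod (f x - y)) < ennreal (inverse (real (Suc n)))"
    proof
      fix n
      have "(INF x\<in>D. ennreal (cmod (f x - y))) < ennreal (inverse (real (Suc n)))"
        using inf0 by simp
      then show "\<exists>x\<in>D. ennreal (cmod (f x - y)) < ennreal (inverse (real (Suc n)))"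
        by (simp add: INF_less_iff)
    qed
    then obtain xs where xs: "\<And>n. xs n \<in> D" "\<And>n. ennreal (cmod (f (xs n) - y)) < ennreal (inverse (real (Suc n)))"
      by metis
    have lt: "cmod (f (xs n) - y) < inverse (real (Suc n))" for n
      using xs(2)[of n] by (simp add: ennreal_less_iff)
    have "(\<lambda>n. f (xs n) - y) \<longlonglongrightarrow> 0"
    proof (rule Lim_null_comparison[OF _ LIMSEQ_inverse_real_of_nat])
      show "\<forall>\<^sub>F n in sequentially. norm (f (xs n) - y) \<le> inverse (real (Suc n))"
        using lt by (simp add: less_imp_le)
    qed
    then have fx: "(\<lambda>n. f (xs n)) \<longlonglongrightarrow> y" by (rule LIM_zero_cancel)
    have fxS: "f (xs n) \<in> S1" for n using Hom_map[OF f] xs(1) DS by blast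
    have ev2: "eventually (\<lambda>n. f (xs n) \<in> S1) sequentially" using fxS by (intro always_eventually) blast
    have "(\<lambda>n. g (f (xs n))) \<longlonglongrightarrow> g y"
      using continuous_on_tendsto_compose[OF gc fx y ev2] by (simp add: o_def)
    moreover have "g (f (xs n)) = xs n" for n
      using homeomorphism_apply1[OF h] xs(1) DS by blast
    ultimately have "xs \<longlonglongrightarrow> g y" by simp
    then have "g y \<in> C" using closed_sequentially[OF C(1)] xs(1) D by blast
    then show "hinv f y \<in> C" using hy by simp
  qed
qed

lemma hinv_meas: "(\<lambda>(f, y). hinv f y) \<in> measurable (HomM \<Otimes>\<^sub>M S1M) S1M"
proof -
  have sp: "space (HomM \<Otimes>\<^sub>M S1M) = Hom \<times> S1" by (simp add: space_pair_measure space_HomM)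
  have hS: "hinv f y \<in> S1" if f: "f \<in> Hom" and y: "y \<in> S1" for f y
  proof -
    obtain g where h: "homeomorphism S1 S1 f g" using Hom_homeo[OF f] by blast
    have gS: "g ` S1 = S1" by (rule homeomorphism_image2[OF h])
    show ?thesis using imageI[of y S1 g] y gS hinv_eq[OF h y] by simp
  qed
  have "(\<lambda>\<xi>. hinv (fst \<xi>) (snd \<xi>)) \<in> borel_measurable (HomM \<Otimes>\<^sub>M S1M)"
    unfolding borel_measurable_iff_halfspace_le
  proof (intro ballI allI)
    fix i :: complex and c :: real
    let ?C = "S1 \<inter> {z. i \<bullet> z \<le> c}"
    have Ccl: "closed ?C" by (intro closed_Int closed_S1 closed_halfspace_le)
    obtain D where D: "countable D" "D \<subseteq> ?C" "?C \<subseteq> closure D" using separable by blast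
    have DS: "D \<subseteq> S1" using D by blast
    let ?F = "\<lambda>\<xi>. INF x\<in>D. ennreal (cmod (fst \<xi> x - snd \<xi>))"
    have Fm: "?F \<in> borel_measurable (HomM \<Otimes>\<^sub>M S1M)"
    proof (rule borel_measurable_INF[OF D(1)])
      fix x assume x: "x \<in> D"
      have m1: "(\<lambda>\<xi>. fst \<xi> x) \<in> borel_measurable (HomM \<Otimes>\<^sub>M S1M)" using x DS by (intro fst_at_meas) blast
      have "(\<lambda>\<xi>. fst \<xi> x - snd \<xi>) \<in> borel_measurable (HomM \<Otimes>\<^sub>M S1M)"
        by (rule borel_measurable_diff[OF m1 snd_borel])
      then have "(\<lambda>\<xi>. cmod (fst \<xi> x - snd \<xi>)) \<in> borel_measurable (HomM \<Otimes>\<^sub>M S1M)"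
        by (rule measurable_compose[OF _ borel_measurable_norm])
      then show "(\<lambda>\<xi>. ennreal (cmod (fst \<xi> x - snd \<xi>))) \<in> borel_measurable (HomM \<Otimes>\<^sub>M S1M)"
        by (rule measurable_compose[OF _ measurable_ennreal])
    qed
    have "{w \<in> space (HomM \<Otimes>\<^sub>M S1M). hinv (fst w) (snd w) \<bullet> i \<le> c} = ?F -` {0} \<inter> space (HomM \<Otimes>\<^sub>M S1M)"
    proof (intro set_eqI iffI)
      fix w assume "w \<in> {w \<in> space (HomM \<Otimes>\<^sub>M S1M). hinv (fst w) (snd w) \<bullet> i \<le> c}"
      then have w: "fst w \<in> Hom" "snd w \<in> S1" "hinv (fst w) (snd w) \<bullet> i \<le> c" by (auto simp: sp)
      have "hinv (fst w) (snd w) \<in> ?C" using w hS[OF w(1,2)] by (simp add: inner_commute)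
      then have "?F w = 0" using hinv_key[OF Ccl _ D(2,3) w(1,2)] by blast
      then show "w \<in> ?F -` {0} \<inter> space (HomM \<Otimes>\<^sub>M S1M)" using w by (simp add: sp mem_Times_iff)
    next
      fix w assume "w \<in> ?F -` {0} \<inter> space (HomM \<Otimes>\<^sub>M S1M)"
      then have w: "fst w \<in> Hom" "snd w \<in> S1" "?F w = 0" by (auto simp: sp)
      then have "hinv (fst w) (snd w) \<in> ?C" using hinv_key[OF Ccl _ D(2,3) w(1,2)] by blast
      then show "w \<in> {w \<in> space (HomM \<Otimes>\<^sub>M S1M). hinv (fst w) (snd w) \<bullet> i \<le> c}"
        using w by (cases w) (auto simp: sp inner_commute)
    qed
    also have "\<dots> \<in> sets (HomM \<Otimes>\<^sub>M S1M)" by (rule measurable_sets[OF Fm]) simp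
    finally show "{w \<in> space (HomM \<Otimes>\<^sub>M S1M). hinv (fst w) (snd w) \<bullet> i \<le> c} \<in> sets (HomM \<Otimes>\<^sub>M S1M)" .
  qed
  moreover have "(\<lambda>\<xi>. hinv (fst \<xi>) (snd \<xi>)) \<in> space (HomM \<Otimes>\<^sub>M S1M) \<rightarrow> S1"
    using hS by (auto simp: sp)
  ultimately have "(\<lambda>\<xi>. hinv (fst \<xi>) (snd \<xi>)) \<in> measurable (HomM \<Otimes>\<^sub>M S1M) (restrict_space borel S1)"
    by (intro measurable_restrict_space2)
  then have "(\<lambda>\<xi>. hinv (fst \<xi>) (snd \<xi>)) \<in> measurable (HomM \<Otimes>\<^sub>M S1M) S1M"
    by (simp only: S1M_def[symmetric])
  then show ?thesis by (simp add: split_beta')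
qed

lemma fwd_gcomp: "fwd_comp \<omega> n = gcomp (\<lambda>f. f) \<omega> n"
  by (induction n) simp_all

lemma bwd_gcomp: "bwd_comp \<omega> n = gcomp hinv \<omega> n"
  by (induction n) simp_all

lemma stat_eq: "stationary nu \<mu> = gstat (\<lambda>f. f) nu \<mu>"
  by (simp add: stationary_def gstat_def)

lemma inv_stat_eq: "inv_stationary nu \<mu> = gstat hinv nu \<mu>"
  by (simp add: inv_stationary_def gstat_def)

theorem corollary1p2:
  fixes nu :: "(complex \<Rightarrow> complex) measure"
    and \<pi> \<theta> :: "(nat \<Rightarrow> complex \<Rightarrow> complex) \<Rightarrow> complex"
  assumes "prob_space nu"
    and "sets nu = sets HomM"
    and "proximal nu"
    and "\<not> fixes_point nu"
    and "\<pi> \<in> measurable (Pi\<^sub>M UNIV (\<lambda>_::nat. nu)) S1M"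
    and "\<theta> \<in> measurable (Pi\<^sub>M UNIV (\<lambda>_::nat. nu)) S1M"
    and "\<forall>x\<in>S1. AE \<omega> in Pi\<^sub>M UNIV (\<lambda>_::nat. nu). (\<lambda>n. fwd_comp \<omega> n x) \<longlonglongrightarrow> \<pi> \<omega>"
    and "\<forall>x\<in>S1. AE \<omega> in Pi\<^sub>M UNIV (\<lambda>_::nat. nu). (\<lambda>n. bwd_comp \<omega> n x) \<longlonglongrightarrow> \<theta> \<omega>"
  shows "stationary nu (distr (Pi\<^sub>M UNIV (\<lambda>_::nat. nu)) S1M \<pi>)
       \<and> (\<forall>\<mu>. prob_space \<mu> \<and> sets \<mu> = sets S1M \<and> stationary nu \<mu>
              \<longrightarrow> \<mu> = distr (Pi\<^sub>M UNIV (\<lambda>_::nat. nu)) S1M \<pi>)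
       \<and> inv_stationary nu (distr (Pi\<^sub>M UNIV (\<lambda>_::nat. nu)) S1M \<theta>)
       \<and> (\<forall>\<mu>. prob_space \<mu> \<and> sets \<mu> = sets S1M \<and> inv_stationary nu \<mu>
              \<longrightarrow> \<mu> = distr (Pi\<^sub>M UNIV (\<lambda>_::nat. nu)) S1M \<theta>)"
proof -
  have spn: "space nu = Hom" using sets_eq_imp_space_eq[OF assms(2)] by (simp add: space_HomM)
  have mc: "measurable (nu \<Otimes>\<^sub>M S1M) S1M = measurable (HomM \<Otimes>\<^sub>M S1M) S1M"
    by (rule measurable_cong_sets[OF sets_pair_measure_cong[OF assms(2) refl] refl])
  have F: "gstat (\<lambda>f. f) nu (distr (Pi\<^sub>M UNIV (\<lambda>_::nat. nu)) S1M \<pi>)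
     \<and> (\<forall>\<mu>. prob_space \<mu> \<and> sets \<mu> = sets S1M \<and> gstat (\<lambda>f. f) nu \<mu> \<longrightarrow> \<mu> = distr (Pi\<^sub>M UNIV (\<lambda>_::nat. nu)) S1M \<pi>)"
  proof (rule generic[OF assms(1) _ _ assms(5)])
    show "(\<lambda>(f, x). f x) \<in> measurable (nu \<Otimes>\<^sub>M S1M) S1M" using eval_meas mc by simp
    show "continuous_on S1 f" if "f \<in> space nu" for f using Hom_cont that spn by simp
    show "AE \<omega> in Pi\<^sub>M UNIV (\<lambda>_::nat. nu). (\<lambda>n. gcomp (\<lambda>f. f) \<omega> n x) \<longlonglongrightarrow> \<pi> \<omega>" if "x \<in> S1" for x
      using assms(7) that by (simp add: fwd_gcomp[symmetric])
  qed
  have B: "gstat hinv nu (distr (Pi\<^sub>M UNIV (\<lambda>_::nat. nu)) S1M \<theta>)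
     \<and> (\<forall>\<mu>. prob_space \<mu> \<and> sets \<mu> = sets S1M \<and> gstat hinv nu \<mu> \<longrightarrow> \<mu> = distr (Pi\<^sub>M UNIV (\<lambda>_::nat. nu)) S1M \<theta>)"
  proof (rule generic[OF assms(1) _ _ assms(6)])
    show "(\<lambda>(f, x). hinv f x) \<in> measurable (nu \<Otimes>\<^sub>M S1M) S1M" using hinv_meas mc by simp
    show "continuous_on S1 (hinv f)" if "f \<in> space nu" for f using hinv_cont that spn by simp
    show "AE \<omega> in Pi\<^sub>M UNIV (\<lambda>_::nat. nu). (\<lambda>n. gcomp hinv \<omega> n x) \<longlonglongrightarrow> \<theta> \<omega>" if "x \<in> S1" for x
      using assms(8) that by (simp add: bwd_gcomp[symmetric])
  qed
  show ?thesis using F B by (simp add: stat_eq inv_stat_eq)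
qed

end
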